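(* Let $N\geq 1$ and $m_p\geq 1$ be integers, let $\beta_1,\ldots,\beta_{m_p}>0$, and let $\mathbf{c}_1,\ldots,\mathbf{c}_{m_p}$ be independent random vectors, each distributed as $\mathcal{CN}(\mathbf{0},\mathbf{I}_N)$. Define $$\mathcal{Y}\triangleq \min_{1\leq i\leq m_p}\beta_i\|\mathbf{c}_i\|^2 .$$ Then $\mathcal{Y}$ has probability density function, for $x>0$, $$f_{\mathcal{Y}}(x)=\sum_{s=1}^{m_p}\ \sum_{(t_l)_{l\neq s}\in\{0,1,\ldots,N-1\}^{m_p-1}}\frac{\beta_s^{-N}}{\Gamma(N)}\left(\prod_{\substack{l=1\\ l\neq s}}^{m_p}\frac{\beta_l^{-t_l}}{t_l!}\right)x^{\sum_{l\neq s}t_l+N-1}\exp\!\left(-\Big(\sum_{t=1}^{m_p}\frac{1}{\beta_t}\Big)x\right),$$ where the inner sum runs over all choices of integers $t_l\in\{0,\ldots,N-1\}$ for each index $l\in\{1,\ldots,m_p\}\setminus\{s\}$.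
   Context: $\mathcal{CN}(\mathbf{0},\mathbf{I}_N)$ denotes the circularly-symmetric complex Gaussian distribution on $\mathbb{C}^N$ with zero mean and identity covariance; $\|\cdot\|$ is the Euclidean norm; $\Gamma(N)=(N-1)!$. *)

theory Defs
  imports "HOL-Probability.Probability"
begin

text \<open>Density of the circularly-symmetric complex Gaussian CN(0, I_N) on complex^'n,
  N = CARD('n), with respect to Lebesgue measure on complex^'n (= R^(2N)):
  f(z) = pi^(-N) * exp(-||z||^2).\<close>
definition cn_std_density :: "complex ^ 'n \<Rightarrow> real" where
  "cn_std_density z = exp (- (norm z)\<^sup>2) / pi ^ CARD('n)"

definition is_CN_std :: "'a measure \<Rightarrow> ('a \<Rightarrow> complex ^ 'n) \<Rightarrow> bool" where
  "is_CN_std M X \<longleftrightarrow> distributed M lborel X (\<lambda>z. ennreal (cn_std_density z))"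

end

theory Submission
  imports Defs
begin


definition gd :: "real \<Rightarrow> real" where "gd t = exp (- t\<^sup>2) / sqrt pi"

lemma gd_normal: "gd = normal_density 0 (1 / sqrt 2)"
  by (auto simp: fun_eq_iff gd_def normal_density_def power_divide real_sqrt_mult)

lemma gd_nonneg[simp]: "0 \<le> gd t" by (simp add: gd_def)
lemma gd_meas[measurable]: "gd \<in> borel_measurable borel" unfolding gd_def by measurable

lemma norm_sq_Basis: "(norm (z::'a::euclidean_space))\<^sup>2 = (\<Sum>b\<in>Basis. (z \<bullet> b)\<^sup>2)"
  unfolding power2_norm_eq_inner by (subst euclidean_inner) (simp add: power2_eq_square)

lemma cn_prod: "cn_std_density (z :: complex ^ 'n) = (\<Prod>b\<in>Basis. gd (z \<bullet> b))"
proof -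
  have "(\<Prod>b\<in>(Basis :: (complex ^ 'n) set). gd (z \<bullet> b)) =
        (\<Prod>b\<in>(Basis :: (complex ^ 'n) set). exp (- (z \<bullet> b)\<^sup>2)) / (\<Prod>b\<in>(Basis :: (complex ^ 'n) set). sqrt pi)"
    unfolding gd_def by (rule prod_dividef)
  also have "(\<Prod>b\<in>(Basis :: (complex ^ 'n) set). exp (- (z \<bullet> b)\<^sup>2)) = exp (- (norm z)\<^sup>2)"
    by (simp add: norm_sq_Basis exp_sum[symmetric] sum_negf)
  also have "(\<Prod>b\<in>(Basis :: (complex ^ 'n) set). sqrt pi) = pi ^ CARD('n)"
  proof -
    have "(\<Prod>b\<in>(Basis :: (complex ^ 'n) set). sqrt pi) = sqrt pi ^ (2 * CARD('n))"
      by (simp only: prod_constant DIM_cart DIM_complex mult.commute)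
    also have "\<dots> = (sqrt pi ^ 2) ^ CARD('n)" by (rule power_mult)
    also have "\<dots> = pi ^ CARD('n)" by simp
    finally show ?thesis .
  qed
  finally have "(\<Prod>b\<in>Basis. gd (z \<bullet> b)) = exp (- (norm z)\<^sup>2) / pi ^ CARD('n)" .
  then show ?thesis unfolding cn_std_density_def by (rule sym)
qed

lemma L1:
  fixes f :: "complex ^ 'n \<Rightarrow> real \<Rightarrow> ennreal"
  assumes [measurable]: "\<And>b. b \<in> Basis \<Longrightarrow> f b \<in> borel_measurable borel"
  shows "(\<integral>\<^sup>+z. ennreal (cn_std_density z) * (\<Prod>b\<in>Basis. f b (z \<bullet> b)) \<partial>lborel)
       = (\<Prod>b\<in>Basis. \<integral>\<^sup>+t. ennreal (gd t) * f b t \<partial>lborel)"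
proof -
  have "(\<integral>\<^sup>+z. ennreal (cn_std_density z) * (\<Prod>b\<in>Basis. f b (z \<bullet> b)) \<partial>lborel)
      = (\<integral>\<^sup>+z. (\<Prod>b\<in>Basis. ennreal (gd (z \<bullet> b)) * f b (z \<bullet> b)) \<partial>lborel)"
    by (intro nn_integral_cong) (simp add: cn_prod prod.distrib prod_ennreal)
  also have "\<dots> = (\<Prod>b\<in>Basis. \<integral>\<^sup>+t. ennreal (gd t) * f b t \<partial>lborel)"
    by (rule nn_integral_lborel_prod[of "\<lambda>b t. ennreal (gd t) * f b t"]) auto
  finally show ?thesis .
qed


definition Pcn :: "(complex ^ 'n) measure" where
  "Pcn = density lborel (\<lambda>z. ennreal (cn_std_density z))"

lemma cn_meas[measurable]: "cn_std_density \<in> borel_measurable borel"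
  unfolding cn_std_density_def by measurable

lemma space_Pcn[simp]: "space Pcn = UNIV" by (simp add: Pcn_def)
lemma sets_Pcn[simp, measurable_cong]: "sets Pcn = sets borel" by (simp add: Pcn_def)

lemma vimage_inner_sets:
  assumes "A \<in> sets borel"
  shows "(\<lambda>z::'a::euclidean_space. z \<bullet> b) -` A \<in> sets borel"
proof -
  have "(\<lambda>z::'a. z \<bullet> b) \<in> borel_measurable borel" by measurable
  from measurable_sets[OF this assms] show ?thesis by simp
qed

lemma emeasure_Pcn_prod:
  fixes A :: "complex ^ 'n \<Rightarrow> real set"
  assumes A: "\<And>b. b \<in> Basis \<Longrightarrow> A b \<in> sets borel"
  shows "emeasure Pcn {z. \<forall>b\<in>Basis. z \<bullet> b \<in> A b} = (\<Prod>b\<in>Basis. \<integral>\<^sup>+t. ennreal (gd t) * indicator (A b) t \<partial>lborel)"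
proof -
  have S: "{z. \<forall>b\<in>Basis. z \<bullet> b \<in> A b} = (\<Inter>b\<in>Basis. (\<lambda>z. z \<bullet> b) -` A b)" by auto
  have Ssets: "{z::complex^'n. \<forall>b\<in>Basis. z \<bullet> b \<in> A b} \<in> sets borel"
    unfolding S using A by (intro sets.finite_INT) (auto intro: vimage_inner_sets)
  have "emeasure Pcn {z. \<forall>b\<in>Basis. z \<bullet> b \<in> A b}
     = (\<integral>\<^sup>+z. ennreal (cn_std_density z) * indicator {z. \<forall>b\<in>Basis. z \<bullet> b \<in> A b} z \<partial>lborel)"
    unfolding Pcn_def using Ssets by (simp add: emeasure_density)
  also have "\<dots> = (\<integral>\<^sup>+z. ennreal (cn_std_density z) * (\<Prod>b\<in>Basis. indicator (A b) (z \<bullet> b)) \<partial>lborel)"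
    by (intro nn_integral_cong) (simp add: indicator_def prod.neutral)
  also have "\<dots> = (\<Prod>b\<in>Basis. \<integral>\<^sup>+t. ennreal (gd t) * indicator (A b) t \<partial>lborel)"
    by (rule L1) (use A in auto)
  finally show ?thesis .
qed


definition Gm :: "real measure" where "Gm = density lborel (\<lambda>t. ennreal (gd t))"

lemma prob_space_Gm: "prob_space Gm"
  unfolding Gm_def gd_normal by (rule prob_space_normal_density) simp

lemma sets_Gm[simp]: "sets Gm = sets borel" by (simp add: Gm_def)

lemma space_Gm[simp]: "space Gm = UNIV" by (simp add: Gm_def)

lemma measure_Gm_UNIV[simp]: "measure Gm UNIV = 1"
  using prob_space.prob_space[OF prob_space_Gm] by simp

lemma nn_gd_ind:
  assumes "A \<in> sets borel"
  shows "(\<integral>\<^sup>+t. ennreal (gd t) * indicator A t \<partial>lborel) = ennreal (measure Gm A)"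
proof -
  interpret prob_space Gm by (rule prob_space_Gm)
  have "(\<integral>\<^sup>+t. ennreal (gd t) * indicator A t \<partial>lborel) = emeasure Gm A"
    unfolding Gm_def using assms by (simp add: emeasure_density)
  also have "\<dots> = ennreal (measure Gm A)" by (simp add: emeasure_eq_measure)
  finally show ?thesis .
qed

lemma emeasure_Pcn_prod':
  fixes A :: "complex ^ 'n \<Rightarrow> real set"
  assumes A: "\<And>b. b \<in> Basis \<Longrightarrow> A b \<in> sets borel"
  shows "emeasure Pcn {z. \<forall>b\<in>Basis. z \<bullet> b \<in> A b} = ennreal (\<Prod>b\<in>Basis. measure Gm (A b))"
  using A by (simp add: emeasure_Pcn_prod nn_gd_ind prod_ennreal)

lemma prob_space_Pcn: "prob_space (Pcn :: (complex ^ 'n) measure)"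
proof
  interpret G: prob_space Gm by (rule prob_space_Gm)
  have "emeasure (Pcn :: (complex ^ 'n) measure) {z. \<forall>b\<in>Basis. z \<bullet> b \<in> (UNIV::real set)} = ennreal (\<Prod>b\<in>(Basis::(complex ^ 'n) set). measure Gm UNIV)"
    by (rule emeasure_Pcn_prod') simp
  also have "\<dots> = 1" by simp
  finally show "emeasure (Pcn :: (complex ^ 'n) measure) (space Pcn) = 1" by simp
qed

lemma measure_Pcn_coord:
  fixes b :: "complex ^ 'n"
  assumes b: "b \<in> Basis" and A: "A \<in> sets borel"
  shows "emeasure (Pcn :: (complex ^ 'n) measure) ((\<lambda>z. z \<bullet> b) -` A) = ennreal (measure Gm A)"
proof -
  interpret G: prob_space Gm by (rule prob_space_Gm)
  have "(\<lambda>z::complex^'n. z \<bullet> b) -` A = {z. \<forall>b'\<in>Basis. z \<bullet> b' \<in> (if b' = b then A else UNIV)}"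
    using b by auto
  moreover have "emeasure (Pcn :: (complex ^ 'n) measure) {z. \<forall>b'\<in>Basis. z \<bullet> b' \<in> (if b' = b then A else UNIV)}
     = ennreal (\<Prod>b'\<in>Basis. measure Gm (if b' = b then A else UNIV))"
    using A by (intro emeasure_Pcn_prod') auto
  moreover have "(\<Prod>b'\<in>(Basis::(complex^'n) set). measure Gm (if b' = b then A else UNIV)) = measure Gm A"
    using b by (simp add: if_distrib prod.delta cong: if_cong)
  ultimately show ?thesis by simp
qed


lemma indep_coords: "prob_space.indep_vars (Pcn::(complex^'n) measure) (\<lambda>_. borel) (\<lambda>b z. z \<bullet> b) Basis"
proof -
  interpret prob_space "Pcn::(complex^'n) measure" by (rule prob_space_Pcn)
  have meas: "(\<lambda>z::complex^'n. z \<bullet> b) \<in> measurable Pcn borel" for b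
    by measurable
  show ?thesis
  proof (subst indep_vars_finite[where E="\<lambda>_. sets borel"], goal_cases)
    case 1 show ?case by (rule nonempty_Basis)
  next
    case 2 show ?case by simp
  next
    case (3 i) show ?case using sets.sigma_sets_eq[of "borel::real measure"] by simp
  next
    case (4 i) show ?case by (rule meas)
  next
    case (5 i) show ?case by (rule sets.Int_stable)
  next
    case (6 i) show ?case by simp
  next
    case (7 i) show ?case by (simp add: sets.space_closed)
  next
    case 8
    show ?case
    proof
      fix A assume A: "A \<in> (\<Pi> i\<in>(Basis::(complex^'n) set). sets (borel::real measure))"
      then have A': "\<And>b. b \<in> Basis \<Longrightarrow> A b \<in> sets borel" by auto
      have "(\<Inter>j\<in>Basis. (\<lambda>z::complex^'n. z \<bullet> j) -` A j \<inter> space Pcn) = {z. \<forall>b\<in>Basis. z \<bullet> b \<in> A b}"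
        by auto
      then have "emeasure Pcn (\<Inter>j\<in>Basis. (\<lambda>z::complex^'n. z \<bullet> j) -` A j \<inter> space Pcn) = ennreal (\<Prod>b\<in>Basis. measure Gm (A b))"
        using emeasure_Pcn_prod'[OF A'] by simp
      then have L: "prob (\<Inter>j\<in>Basis. (\<lambda>z::complex^'n. z \<bullet> j) -` A j \<inter> space Pcn) = (\<Prod>b\<in>Basis. measure Gm (A b))"
        by (simp add: emeasure_eq_measure prod_nonneg)
      have R: "prob ((\<lambda>z::complex^'n. z \<bullet> j) -` A j) = measure Gm (A j)" if j: "j \<in> Basis" for j
        using measure_Pcn_coord[OF j A'[OF j]] by (simp add: emeasure_eq_measure)
      show "prob (\<Inter>j\<in>Basis. (\<lambda>z::complex^'n. z \<bullet> j) -` A j \<inter> space Pcn) =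
            (\<Prod>j\<in>Basis. prob ((\<lambda>z::complex^'n. z \<bullet> j) -` A j \<inter> space Pcn))"
        unfolding L by (rule prod.cong) (auto simp: R)
    qed
  qed
qed

lemma coord_normal:
  assumes b: "(b::complex^'n) \<in> Basis"
  shows "distributed (Pcn::(complex^'n) measure) lborel (\<lambda>z. z \<bullet> b) gd"
proof (rule distributedI_borel_atMost[where g="\<lambda>a. measure Gm {..a}"])
  show "(\<lambda>z::complex^'n. z \<bullet> b) \<in> borel_measurable Pcn" by measurable
  show "gd \<in> borel_measurable borel" by simp
  show "AE x in lborel. 0 \<le> gd x" by simp
  fix a :: real
  show "(\<integral>\<^sup>+x. ennreal (gd x * indicator {..a} x) \<partial>lborel) = ennreal (measure Gm {..a})"
    using nn_gd_ind[of "{..a}"] by (simp add: ennreal_mult' ennreal_indicator)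
  have "{x \<in> space Pcn. x \<bullet> b \<le> a} = (\<lambda>z::complex^'n. z \<bullet> b) -` {..a}" by auto
  then show "emeasure Pcn {x \<in> space Pcn. x \<bullet> b \<le> a} = ennreal (measure Gm {..a})"
    using measure_Pcn_coord[OF b, of "{..a}"] by simp
qed


lemma nn_integral_even:
  fixes h :: "real \<Rightarrow> ennreal"
  assumes [measurable]: "h \<in> borel_measurable borel" and even: "\<And>y. h (-y) = h y"
  shows "(\<integral>\<^sup>+y. h y \<partial>lborel) = 2 * (\<integral>\<^sup>+y. h y * indicator {0<..} y \<partial>lborel)"
proof -
  have "(\<integral>\<^sup>+y. h y \<partial>lborel) = (\<integral>\<^sup>+y. h y * indicator {0<..} y + h y * indicator {..0} y \<partial>lborel)"
    by (intro nn_integral_cong) (auto split: split_indicator)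
  also have "\<dots> = (\<integral>\<^sup>+y. h y * indicator {0<..} y \<partial>lborel) + (\<integral>\<^sup>+y. h y * indicator {..0} y \<partial>lborel)"
    by (rule nn_integral_add) auto
  also have "(\<integral>\<^sup>+y. h y * indicator {..0} y \<partial>lborel) = (\<integral>\<^sup>+y. h y * indicator {0..} y \<partial>lborel)"
  proof -
    have "(\<integral>\<^sup>+y. h y * indicator {..0} y \<partial>lborel) = ennreal \<bar>-1\<bar> * (\<integral>\<^sup>+y. h (0 + -1 * y) * indicator {..0} (0 + -1 * y) \<partial>lborel)"
      by (rule nn_integral_real_affine) auto
    also have "\<dots> = (\<integral>\<^sup>+y. h y * indicator {0..} y \<partial>lborel)"
      by (auto simp: even intro!: nn_integral_cong split: split_indicator)
    finally show ?thesis .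
  qed
  also have "(\<integral>\<^sup>+y. h y * indicator {0..} y \<partial>lborel) = (\<integral>\<^sup>+y. h y * indicator {0<..} y \<partial>lborel)"
    by (intro nn_integral_cong_AE) (use AE_lborel_singleton[of 0] in \<open>auto split: split_indicator\<close>)
  finally show ?thesis by (simp add: mult_2)
qed

definition kk :: "real \<Rightarrow> real \<Rightarrow> real \<Rightarrow> real" where
  "kk a x y = (if x\<^sup>2 + y\<^sup>2 \<le> a then exp (- x\<^sup>2) * exp (- y\<^sup>2) else 0)"

lemma kk_nonneg[simp]: "0 \<le> kk a x y" by (simp add: kk_def)

lemma kk_meas[measurable]: "case_prod (kk a) \<in> borel_measurable (borel \<Otimes>\<^sub>M borel)"
  unfolding kk_def by measurable

lemma kk_meas2[measurable]: "kk a x \<in> borel_measurable borel"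
  unfolding kk_def by measurable

lemma kk_sub:
  assumes x: "0 < x"
  shows "(\<integral>\<^sup>+y. ennreal (kk a x y) * indicator {0<..} y \<partial>lborel)
    = (\<integral>\<^sup>+s. ennreal (x * exp (- (x\<^sup>2 * (1 + s\<^sup>2)))) * indicator {0<..} s * indicator {..a} (x\<^sup>2 * (1 + s\<^sup>2)) \<partial>lborel)"
proof -
  have "(\<integral>\<^sup>+y. ennreal (kk a x y) * indicator {0<..} y \<partial>lborel)
     = ennreal \<bar>x\<bar> * (\<integral>\<^sup>+s. ennreal (kk a x (0 + x * s)) * indicator {0<..} (0 + x * s) \<partial>lborel)"
    using x by (intro nn_integral_real_affine) auto
  also have "\<dots> = (\<integral>\<^sup>+s. ennreal x * (ennreal (kk a x (x * s)) * indicator {0<..} (x * s)) \<partial>lborel)"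
    using x by (simp add: nn_integral_cmult)
  also have "\<dots> = (\<integral>\<^sup>+s. ennreal (x * exp (- (x\<^sup>2 * (1 + s\<^sup>2)))) * indicator {0<..} s * indicator {..a} (x\<^sup>2 * (1 + s\<^sup>2)) \<partial>lborel)"
  proof (intro nn_integral_cong)
    fix s :: real
    have e: "exp (- x\<^sup>2) * exp (- (x * s)\<^sup>2) = exp (- (x\<^sup>2 * (1 + s\<^sup>2)))"
      by (simp add: mult_exp_exp power_mult_distrib algebra_simps)
    have i: "(x * s > 0) = (s > 0)" using x by (simp add: zero_less_mult_iff)
    have j: "x\<^sup>2 + (x * s)\<^sup>2 = x\<^sup>2 * (1 + s\<^sup>2)" by (simp add: power_mult_distrib algebra_simps)
    show "ennreal x * (ennreal (kk a x (x * s)) * indicator {0<..} (x * s)) =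
          ennreal (x * exp (- (x\<^sup>2 * (1 + s\<^sup>2)))) * indicator {0<..} s * indicator {..a} (x\<^sup>2 * (1 + s\<^sup>2))"
      using x unfolding kk_def j e by (auto simp: i ennreal_mult split: split_indicator)
  qed
  finally show ?thesis .
qed

lemma x_int:
  assumes a: "0 \<le> a"
  shows "(\<integral>\<^sup>+x. ennreal (x * exp (- (x\<^sup>2 * (1 + s\<^sup>2)))) * indicator {0<..} s * indicator {..a} (x\<^sup>2 * (1 + s\<^sup>2)) * indicator {0<..} x \<partial>lborel)
     = ennreal ((1 - exp (- a)) / (2 * (1 + s\<^sup>2))) * indicator {0<..} s"
proof -
  define c where "c = 1 + s\<^sup>2"
  have c: "0 < c" unfolding c_def by (simp add: add_pos_nonneg)
  define r where "r = sqrt (a / c)"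
  have r: "0 \<le> r" unfolding r_def using a c by simp
  have rr: "r\<^sup>2 = a / c" unfolding r_def using a c by simp
  have key: "(x\<^sup>2 * c \<le> a) = (x \<le> r)" if "0 < x" for x
  proof -
    have "(x\<^sup>2 * c \<le> a) = (x\<^sup>2 \<le> r\<^sup>2)" unfolding rr using c by (simp add: pos_le_divide_eq)
    also have "\<dots> = (x \<le> r)" using that r by (simp add: power2_le_iff_abs_le)
    finally show ?thesis .
  qed
  have "(\<integral>\<^sup>+x. ennreal (x * exp (- (x\<^sup>2 * c))) * indicator {..a} (x\<^sup>2 * c) * indicator {0<..} x \<partial>lborel)
      = (\<integral>\<^sup>+x. ennreal (x * exp (- (x\<^sup>2 * c))) * indicator {0..r} x \<partial>lborel)"
  proof (intro nn_integral_cong)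
    fix x :: real
    show "ennreal (x * exp (- (x\<^sup>2 * c))) * indicator {..a} (x\<^sup>2 * c) * indicator {0<..} x =
          ennreal (x * exp (- (x\<^sup>2 * c))) * indicator {0..r} x"
      by (cases "0 < x"; cases "x = 0") (auto simp: key split: split_indicator)
  qed
  also have "\<dots> = ennreal (- exp (- (r\<^sup>2 * c)) / (2 * c) - - exp (- (0\<^sup>2 * c)) / (2 * c))"
  proof (rule nn_integral_FTC_Icc[where F="\<lambda>x. - exp (- (x\<^sup>2 * c)) / (2 * c)"])
    show "(\<lambda>x. x * exp (- (x\<^sup>2 * c))) \<in> borel_measurable borel" by measurable
    show "0 \<le> r" by (rule r)
    fix x assume x: "x \<in> {0..r}"
    then show "0 \<le> x * exp (- (x\<^sup>2 * c))" by simp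
    show "((\<lambda>x. - exp (- (x\<^sup>2 * c)) / (2 * c)) has_real_derivative x * exp (- (x\<^sup>2 * c))) (at x)"
      using c by (auto intro!: derivative_eq_intros simp: field_simps)
  qed
  also have "- exp (- (r\<^sup>2 * c)) / (2 * c) - - exp (- (0\<^sup>2 * c)) / (2 * c) = (1 - exp (- a)) / (2 * c)"
    using c unfolding rr by (simp add: field_simps)
  finally show ?thesis
    unfolding c_def by (auto split: split_indicator)
qed


lemma s_int:
  assumes a: "0 \<le> a"
  shows "(\<integral>\<^sup>+s. ennreal ((1 - exp (- a)) / (2 * (1 + s\<^sup>2))) * indicator {0<..} s \<partial>lborel)
     = ennreal ((1 - exp (- a)) * pi / 4)"
proof -
  have nn: "0 \<le> 1 - exp (- a)" using a by simp
  have "(\<integral>\<^sup>+s. ennreal ((1 - exp (- a)) / (2 * (1 + s\<^sup>2))) * indicator {0<..} s \<partial>lborel)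
      = (\<integral>\<^sup>+s. ennreal ((1 - exp (- a)) / (2 * (1 + s\<^sup>2))) * indicator {0..} s \<partial>lborel)"
    by (intro nn_integral_cong_AE) (use AE_lborel_singleton[of 0] in \<open>auto split: split_indicator\<close>)
  also have "\<dots> = ennreal ((1 - exp (- a)) * (pi / 2) / 2 - (1 - exp (- a)) * arctan 0 / 2)"
  proof (rule nn_integral_FTC_atLeast[where F="\<lambda>s. (1 - exp (- a)) * arctan s / 2"])
    show "(\<lambda>s. (1 - exp (- a)) / (2 * (1 + s\<^sup>2))) \<in> borel_measurable borel" by measurable
    fix x :: real assume "0 \<le> x"
    show "((\<lambda>s. (1 - exp (- a)) * arctan s / 2) has_real_derivative (1 - exp (- a)) / (2 * (1 + x\<^sup>2))) (at x)"
      by (auto intro!: derivative_eq_intros simp: field_simps add_nonneg_eq_0_iff power2_eq_square)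
    show "0 \<le> (1 - exp (- a)) / (2 * (1 + x\<^sup>2))" using nn by (simp add: add_nonneg_nonneg)
  next
    show "((\<lambda>s. (1 - exp (- a)) * arctan s / 2) \<longlongrightarrow> (1 - exp (- a)) * (pi / 2) / 2) at_top"
      by (intro tendsto_intros tendsto_arctan_at_top) simp
  qed
  also have "\<dots> = ennreal ((1 - exp (- a)) * pi / 4)" by simp
  finally show ?thesis .
qed

lemma Q_int:
  assumes a: "0 \<le> a"
  shows "(\<integral>\<^sup>+x. \<integral>\<^sup>+y. ennreal (kk a x y) \<partial>lborel \<partial>lborel) = ennreal (pi * (1 - exp (- a)))"
proof -
  let ?I = "\<lambda>x. \<integral>\<^sup>+y. ennreal (kk a x y) * indicator {0<..} y \<partial>lborel"
  have ev: "kk a x (- y) = kk a x y" "kk a (- x) y = kk a x y" for x y by (simp_all add: kk_def)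
  have "(\<integral>\<^sup>+x. \<integral>\<^sup>+y. ennreal (kk a x y) \<partial>lborel \<partial>lborel) = (\<integral>\<^sup>+x. 2 * ?I x \<partial>lborel)"
    by (intro nn_integral_cong nn_integral_even) (auto simp: ev)
  also have "\<dots> = 2 * (\<integral>\<^sup>+x. ?I x \<partial>lborel)"
    by (rule nn_integral_cmult) measurable
  also have "(\<integral>\<^sup>+x. ?I x \<partial>lborel) = 2 * (\<integral>\<^sup>+x. ?I x * indicator {0<..} x \<partial>lborel)"
    by (rule nn_integral_even) (measurable, simp add: ev)
  also have "(\<integral>\<^sup>+x. ?I x * indicator {0<..} x \<partial>lborel) =
     (\<integral>\<^sup>+x. \<integral>\<^sup>+s. ennreal (x * exp (- (x\<^sup>2 * (1 + s\<^sup>2)))) * indicator {0<..} s * indicator {..a} (x\<^sup>2 * (1 + s\<^sup>2)) * indicator {0<..} x \<partial>lborel \<partial>lborel)"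
  proof (intro nn_integral_cong)
    fix x :: real
    show "?I x * indicator {0<..} x = (\<integral>\<^sup>+s. ennreal (x * exp (- (x\<^sup>2 * (1 + s\<^sup>2)))) * indicator {0<..} s * indicator {..a} (x\<^sup>2 * (1 + s\<^sup>2)) * indicator {0<..} x \<partial>lborel)"
      by (cases "0 < x") (simp_all add: kk_sub nn_integral_multc)
  qed
  also have "\<dots> = (\<integral>\<^sup>+s. \<integral>\<^sup>+x. ennreal (x * exp (- (x\<^sup>2 * (1 + s\<^sup>2)))) * indicator {0<..} s * indicator {..a} (x\<^sup>2 * (1 + s\<^sup>2)) * indicator {0<..} x \<partial>lborel \<partial>lborel)"
    by (rule lborel_pair.Fubini'[symmetric]) measurable
  also have "\<dots> = (\<integral>\<^sup>+s. ennreal ((1 - exp (- a)) / (2 * (1 + s\<^sup>2))) * indicator {0<..} s \<partial>lborel)"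
    by (intro nn_integral_cong x_int a)
  also have "\<dots> = ennreal ((1 - exp (- a)) * pi / 4)" by (rule s_int[OF a])
  finally have eq: "(\<integral>\<^sup>+x. \<integral>\<^sup>+y. ennreal (kk a x y) \<partial>lborel \<partial>lborel) = 2 * (2 * ennreal ((1 - exp (- a)) * pi / 4))" .
  have "ennreal (pi * (1 - exp (- a))) = ennreal (4 * ((1 - exp (- a)) * pi / 4))" by (simp add: mult.commute)
  also have "\<dots> = ennreal 4 * ennreal ((1 - exp (- a)) * pi / 4)"
    using a by (intro ennreal_mult) auto
  finally have "ennreal (pi * (1 - exp (- a))) = 2 * (2 * ennreal ((1 - exp (- a)) * pi / 4))"
    by (simp add: mult.assoc[symmetric])
  then show ?thesis unfolding eq by simp
qed


lemma (in prob_space) indep_var_lborel: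
  "indep_var borel X borel Y \<Longrightarrow> indep_var lborel X lborel Y"
proof -
  have e: "case_bool (lborel::real measure) lborel = (\<lambda>_. lborel)" "case_bool (borel::real measure) borel = (\<lambda>_. borel)"
    by (auto simp: fun_eq_iff split: bool.split)
  assume "indep_var borel X borel Y"
  then show ?thesis unfolding indep_var_def indep_vars_def2 by (simp add: bool.case_eq_if measurable_lborel2)
qed

lemma (in prob_space) sumsq_exponential:
  assumes ind: "indep_var borel X borel Y"
    and X: "distributed M lborel X gd" and Y: "distributed M lborel Y gd"
  shows "distributed M lborel (\<lambda>\<omega>. (X \<omega>)\<^sup>2 + (Y \<omega>)\<^sup>2) (erlang_density 0 1)"
proof (rule erlang_distributedI)
  have [measurable]: "X \<in> borel_measurable M" "Y \<in> borel_measurable M"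
    using distributed_measurable[OF X] distributed_measurable[OF Y] by simp_all
  show "(\<lambda>\<omega>. (X \<omega>)\<^sup>2 + (Y \<omega>)\<^sup>2) \<in> borel_measurable M" by measurable
  show "(0::real) < 1" by simp
  fix a :: real assume a: "0 \<le> a"
  have J: "distributed M (lborel \<Otimes>\<^sub>M lborel) (\<lambda>x. (X x, Y x)) (\<lambda>(x, y). ennreal (gd x) * ennreal (gd y))"
    by (rule distributed_joint_indep[OF _ _ X Y indep_var_lborel[OF ind]])
       (auto intro: lborel.sigma_finite_measure_axioms)
  define D where "D = {p\<in>space (lborel \<Otimes>\<^sub>M lborel). (fst p)\<^sup>2 + (snd p)\<^sup>2 \<le> (a::real)}"
  have Dm: "D \<in> sets (lborel \<Otimes>\<^sub>M lborel)" unfolding D_def by measurable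
  have "emeasure M {x\<in>space M. (X x)\<^sup>2 + (Y x)\<^sup>2 \<le> a} = emeasure (distr M (lborel \<Otimes>\<^sub>M lborel) (\<lambda>x. (X x, Y x))) D"
    using Dm distributed_measurable[OF J] by (subst emeasure_distr) (auto simp: D_def space_pair_measure intro!: arg_cong2[where f=emeasure])
  also have "\<dots> = emeasure (density (lborel \<Otimes>\<^sub>M lborel) (\<lambda>(x, y). ennreal (gd x) * ennreal (gd y))) D"
    unfolding distributed_distr_eq_density[OF J] ..
  also have "\<dots> = (\<integral>\<^sup>+p. (\<lambda>(x, y). ennreal (gd x) * ennreal (gd y)) p * indicator D p \<partial>(lborel \<Otimes>\<^sub>M lborel))"
    by (rule emeasure_density[OF _ Dm]) measurable
  also have "\<dots> = (\<integral>\<^sup>+x. \<integral>\<^sup>+y. (\<lambda>(x, y). ennreal (gd x) * ennreal (gd y)) (x, y) * indicator D (x, y) \<partial>lborel \<partial>lborel)"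
    by (rule lborel.nn_integral_fst[symmetric]) (use Dm distributed_borel_measurable[OF J] in auto)
  also have "\<dots> = (\<integral>\<^sup>+x. \<integral>\<^sup>+y. ennreal (1 / pi) * ennreal (kk a x y) \<partial>lborel \<partial>lborel)"
  proof (intro nn_integral_cong)
    fix x y :: real
    have "gd x * gd y = exp (- x\<^sup>2) * exp (- y\<^sup>2) / pi"
      by (simp add: gd_def)
    then show "(\<lambda>(x, y). ennreal (gd x) * ennreal (gd y)) (x, y) * indicator D (x, y) = ennreal (1 / pi) * ennreal (kk a x y)"
      by (auto simp: D_def kk_def ennreal_mult[symmetric] space_pair_measure split: split_indicator)
  qed
  also have "\<dots> = ennreal (1 / pi) * (\<integral>\<^sup>+x. \<integral>\<^sup>+y. ennreal (kk a x y) \<partial>lborel \<partial>lborel)"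
    by (simp add: nn_integral_cmult)
  also have "\<dots> = ennreal (1 / pi) * ennreal (pi * (1 - exp (- a)))" by (simp add: Q_int a)
  also have "\<dots> = ennreal (erlang_CDF 0 1 a)"
    using a by (simp add: ennreal_mult[symmetric] erlang_CDF_def)
  finally show "emeasure M {x\<in>space M. (X x)\<^sup>2 + (Y x)\<^sup>2 \<le> a} = ennreal (erlang_CDF 0 1 a)" .
qed


lemma norm_sq_vec: "(norm (z::complex^'n))\<^sup>2 = (\<Sum>j\<in>UNIV. (norm (z $ j))\<^sup>2)"
  by (simp add: power2_norm_eq_inner inner_vec_def)

lemma Pcn_norm_erlang:
  "distributed (Pcn::(complex^'n) measure) lborel (\<lambda>z. (norm z)\<^sup>2) (erlang_density (CARD('n) - 1) 1)"
proof -
  interpret prob_space "Pcn::(complex^'n) measure" by (rule prob_space_Pcn)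
  note ic = indep_coords[where 'n='n]
  define a where "a = (\<lambda>j::'n. axis j (1::complex))"
  define c where "c = (\<lambda>j::'n. axis j (\<i>::complex))"
  have aB: "a j \<in> Basis" "c j \<in> Basis" for j by (simp_all add: a_def c_def)
  have ac: "a j \<noteq> c j" for j by (simp add: a_def c_def axis_eq_axis complex_eq_iff)
  have az: "z \<bullet> a j = Re (z $ j)" "z \<bullet> c j = Im (z $ j)" for z :: "complex^'n" and j
    by (simp_all add: a_def c_def inner_axis)
  have exp_j: "distributed Pcn lborel (\<lambda>z::complex^'n. (norm (z $ j))\<^sup>2) (erlang_density 0 1)" for j
  proof -
    have iv: "indep_var (Pi\<^sub>M {a j} (\<lambda>_. borel)) (\<lambda>\<omega>. restrict (\<lambda>b. \<omega> \<bullet> b) {a j})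
                        (Pi\<^sub>M {c j} (\<lambda>_. borel)) (\<lambda>\<omega>. restrict (\<lambda>b. \<omega> \<bullet> b) {c j})"
      by (rule indep_var_restrict[OF ic]) (auto simp: aB ac)
    have "indep_var borel ((\<lambda>f. f (a j)) \<circ> (\<lambda>\<omega>. restrict (\<lambda>b. \<omega> \<bullet> b) {a j}))
                    borel ((\<lambda>f. f (c j)) \<circ> (\<lambda>\<omega>. restrict (\<lambda>b. \<omega> \<bullet> b) {c j}))"
      by (rule indep_var_compose[OF iv]) auto
    also have "((\<lambda>f. f (a j)) \<circ> (\<lambda>\<omega>. restrict (\<lambda>b. \<omega> \<bullet> b) {a j})) = (\<lambda>z. z \<bullet> a j)" by auto
    also have "((\<lambda>f. f (c j)) \<circ> (\<lambda>\<omega>. restrict (\<lambda>b. \<omega> \<bullet> b) {c j})) = (\<lambda>z. z \<bullet> c j)" by auto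
    finally have ind: "indep_var borel (\<lambda>z::complex^'n. z \<bullet> a j) borel (\<lambda>z. z \<bullet> c j)" .
    have "distributed Pcn lborel (\<lambda>z::complex^'n. (z \<bullet> a j)\<^sup>2 + (z \<bullet> c j)\<^sup>2) (erlang_density 0 1)"
      by (rule sumsq_exponential[OF ind coord_normal coord_normal]) (simp_all add: aB)
    also have "(\<lambda>z::complex^'n. (z \<bullet> a j)\<^sup>2 + (z \<bullet> c j)\<^sup>2) = (\<lambda>z. (norm (z $ j))\<^sup>2)"
      by (simp add: az cmod_power2)
    finally show ?thesis .
  qed
  have indY: "indep_vars (\<lambda>_. borel) (\<lambda>j (z::complex^'n). (norm (z $ j))\<^sup>2) UNIV"
  proof -
    have iv: "indep_vars (\<lambda>j. Pi\<^sub>M {a j, c j} (\<lambda>_. borel)) (\<lambda>j \<omega>. restrict (\<lambda>b. \<omega> \<bullet> b) {a j, c j}) UNIV"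
      by (rule indep_vars_restrict[OF ic]) (auto simp: aB disjoint_family_on_def a_def c_def axis_eq_axis)
    have "indep_vars (\<lambda>_. borel) (\<lambda>j \<omega>. (\<lambda>f. (f (a j))\<^sup>2 + (f (c j))\<^sup>2) (restrict (\<lambda>b. \<omega> \<bullet> b) {a j, c j})) UNIV"
      by (rule indep_vars_compose2[OF iv]) auto
    then show ?thesis
      by (rule indep_vars_cong[THEN iffD1, rotated 3]) (auto simp: az cmod_power2)
  qed
  have "distributed Pcn lborel (\<lambda>z::complex^'n. \<Sum>j\<in>UNIV. (norm (z $ j))\<^sup>2) (erlang_density (card (UNIV::'n set) - 1) 1)"
    by (rule exponential_distributed_sum[OF _ _ _ exp_j indY]) auto
  then show ?thesis by (simp add: norm_sq_vec)
qed

lemma CN_norm_erlang: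
  assumes "is_CN_std M (X :: 'a \<Rightarrow> complex^'n)"
  shows "distributed M lborel (\<lambda>\<omega>. (norm (X \<omega>))\<^sup>2) (erlang_density (CARD('n) - 1) 1)"
proof -
  have D: "distributed M lborel X (\<lambda>z. ennreal (cn_std_density z))"
    using assms by (simp add: is_CN_std_def)
  have Xm: "X \<in> measurable M lborel" by (rule distributed_measurable[OF D])
  then have [measurable]: "X \<in> borel_measurable M" by (simp add: measurable_lborel2)
  have dX: "distr M lborel X = Pcn" unfolding Pcn_def by (rule distributed_distr_eq_density[OF D])
  note P = Pcn_norm_erlang[where 'n='n]
  show ?thesis unfolding distributed_def
  proof safe
    have "distr M lborel (\<lambda>\<omega>. (norm (X \<omega>))\<^sup>2) = distr (distr M lborel X) lborel (\<lambda>z. (norm z)\<^sup>2)"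
      by (subst distr_distr) (auto simp: comp_def Xm)
    also have "\<dots> = density lborel (erlang_density (CARD('n) - 1) 1)"
      unfolding dX by (rule distributed_distr_eq_density[OF P])
    finally show "distr M lborel (\<lambda>\<omega>. (norm (X \<omega>))\<^sup>2) = density lborel (erlang_density (CARD('n) - 1) 1)" .
    show "(\<lambda>\<omega>. (norm (X \<omega>))\<^sup>2) \<in> measurable M lborel" unfolding measurable_lborel2 by measurable
    show "(\<lambda>x. ennreal (erlang_density (CARD('n) - 1) 1 x)) \<in> borel_measurable lborel" by simp
  qed
qed


definition Sv :: "nat \<Rightarrow> real \<Rightarrow> real \<Rightarrow> real" where
  "Sv k b x = (\<Sum>n\<le>k. (x / b) ^ n / fact n) * exp (- x / b)"

definition Dd :: "nat \<Rightarrow> real \<Rightarrow> real \<Rightarrow> real" where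
  "Dd k b x = (x / b) ^ k / fact k * exp (- x / b) / b"

lemma Sv_deriv:
  assumes b: "0 < b"
  shows "(Sv k b has_real_derivative (- Dd k b x)) (at x)"
proof (induction k)
  case 0
  show ?case using b unfolding Sv_def Dd_def
    by (auto intro!: derivative_eq_intros simp: field_simps)
next
  case (Suc k)
  have T: "((\<lambda>x. (x / b) ^ Suc k / fact (Suc k) * exp (- x / b)) has_real_derivative
         (Dd k b x - Dd (Suc k) b x)) (at x)"
    using b unfolding Dd_def
    by (auto intro!: derivative_eq_intros simp del: fact_Suc power_Suc
          simp add: field_simps power_Suc[symmetric])
       (simp_all add: field_simps)
  have "Sv (Suc k) b = (\<lambda>x. Sv k b x + (x / b) ^ Suc k / fact (Suc k) * exp (- x / b))"
    by (auto simp: Sv_def fun_eq_iff algebra_simps)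
  moreover have "((\<lambda>x. Sv k b x + (x / b) ^ Suc k / fact (Suc k) * exp (- x / b)) has_real_derivative
       (- Dd k b x + (Dd k b x - Dd (Suc k) b x))) (at x)"
    by (intro DERIV_add Suc T)
  ultimately show ?case by simp
qed

lemma Sv_0[simp]: "Sv k b 0 = 1"
  by (simp add: Sv_def power_0_left sum.atMost_shift del: sum.atMost_Suc)

lemma Sv_nonneg: "0 < b \<Longrightarrow> 0 \<le> x \<Longrightarrow> 0 \<le> Sv k b x"
  unfolding Sv_def by (intro mult_nonneg_nonneg sum_nonneg) auto

lemma Dd_nonneg: "0 < b \<Longrightarrow> 0 \<le> x \<Longrightarrow> 0 \<le> Dd k b x"
  unfolding Dd_def by simp


lemma F_deriv:
  assumes I: "finite I" and b: "\<And>i. i \<in> I \<Longrightarrow> 0 < \<beta> i"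
  shows "((\<lambda>x. 1 - (\<Prod>i\<in>I. Sv k (\<beta> i) x)) has_real_derivative
           (\<Sum>s\<in>I. Dd k (\<beta> s) x * (\<Prod>l\<in>I - {s}. Sv k (\<beta> l) x))) (at x)"
proof -
  have "((\<lambda>x. \<Prod>i\<in>I. Sv k (\<beta> i) x) has_real_derivative
           (\<Sum>s\<in>I. (- Dd k (\<beta> s) x) * (\<Prod>l\<in>I - {s}. Sv k (\<beta> l) x))) (at x)"
    by (rule has_field_derivative_prod) (rule Sv_deriv[OF b])
  then have "((\<lambda>x. 1 - (\<Prod>i\<in>I. Sv k (\<beta> i) x)) has_real_derivative
           0 - (\<Sum>s\<in>I. (- Dd k (\<beta> s) x) * (\<Prod>l\<in>I - {s}. Sv k (\<beta> l) x))) (at x)"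
    by (intro DERIV_diff DERIV_const)
  then show ?thesis by (simp add: sum_negf)
qed

lemma Dd_alt:
  assumes b: "0 < b"
  shows "Dd k b x = x ^ k * (b powr (- real (Suc k)) / Gamma (real (Suc k))) * exp (- x / b)"
proof -
  have "Gamma (real (Suc k)) = fact k" using Gamma_fact[of k] by (simp add: of_nat_Suc add.commute)
  moreover have "b powr (- real (Suc k)) = inverse (b ^ Suc k)"
    by (simp only: powr_minus powr_realpow[OF b])
  ultimately show ?thesis
    unfolding Dd_def using b by (simp add: field_simps power_divide)
qed

lemma term_alt:
  assumes b: "0 < b"
  shows "(x / b) ^ t / fact t = x ^ t * (b powr (- real t) / fact t)"
  using b by (simp add: powr_minus powr_realpow field_simps power_divide)

lemma formula_eq:
  assumes I: "finite I" and s: "s \<in> I" and b: "\<And>i. i \<in> I \<Longrightarrow> 0 < \<beta> i"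
  shows "Dd k (\<beta> s) x * (\<Prod>l\<in>I - {s}. Sv k (\<beta> l) x) =
    (\<Sum>t\<in>PiE (I - {s}) (\<lambda>_. {0..<Suc k}).
           (\<beta> s powr (- real (Suc k)) / Gamma (real (Suc k))) *
           (\<Prod>l\<in>I - {s}. \<beta> l powr (- real (t l)) / fact (t l)) *
           x ^ ((\<Sum>l\<in>I - {s}. t l) + Suc k - 1) *
           exp (- (\<Sum>j\<in>I. 1 / \<beta> j) * x))"
proof -
  let ?J = "I - {s}"
  have fJ: "finite ?J" using I by simp
  have E: "exp (- (\<Sum>j\<in>I. 1 / \<beta> j) * x) = exp (- x / \<beta> s) * (\<Prod>l\<in>?J. exp (- x / \<beta> l))"
  proof -
    have "(\<Sum>j\<in>I. 1 / \<beta> j) = 1 / \<beta> s + (\<Sum>j\<in>?J. 1 / \<beta> j)"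
      using I s by (simp add: sum.remove)
    then have "- (\<Sum>j\<in>I. 1 / \<beta> j) * x = - x / \<beta> s + (\<Sum>l\<in>?J. - x / \<beta> l)"
      by (simp add: algebra_simps sum_distrib_left sum_negf)
    then show ?thesis by (simp only: exp_add exp_sum[OF fJ])
  qed
  have "(\<Prod>l\<in>?J. Sv k (\<beta> l) x) = (\<Prod>l\<in>?J. \<Sum>n\<in>{0..<Suc k}. (x / \<beta> l) ^ n / fact n) * (\<Prod>l\<in>?J. exp (- x / \<beta> l))"
    unfolding Sv_def prod.distrib by (simp add: atLeast0LessThan lessThan_Suc_atMost)
  also have "(\<Prod>l\<in>?J. \<Sum>n\<in>{0..<Suc k}. (x / \<beta> l) ^ n / fact n) =
      (\<Sum>t\<in>PiE ?J (\<lambda>_. {0..<Suc k}). \<Prod>l\<in>?J. (x / \<beta> l) ^ t l / fact (t l))"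
    using fJ by (rule prod_sum_PiE) simp
  finally have P: "(\<Prod>l\<in>?J. Sv k (\<beta> l) x) = (\<Sum>t\<in>PiE ?J (\<lambda>_. {0..<Suc k}). \<Prod>l\<in>?J. (x / \<beta> l) ^ t l / fact (t l)) * (\<Prod>l\<in>?J. exp (- x / \<beta> l))" .
  have T: "Dd k (\<beta> s) x * ((\<Prod>l\<in>?J. (x / \<beta> l) ^ t l / fact (t l)) * (\<Prod>l\<in>?J. exp (- x / \<beta> l))) =
        (\<beta> s powr (- real (Suc k)) / Gamma (real (Suc k))) *
           (\<Prod>l\<in>?J. \<beta> l powr (- real (t l)) / fact (t l)) *
           x ^ ((\<Sum>l\<in>?J. t l) + Suc k - 1) *
           exp (- (\<Sum>j\<in>I. 1 / \<beta> j) * x)" for t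
  proof -
    have "(\<Prod>l\<in>?J. (x / \<beta> l) ^ t l / fact (t l)) = x ^ (\<Sum>l\<in>?J. t l) * (\<Prod>l\<in>?J. \<beta> l powr (- real (t l)) / fact (t l))"
    proof -
      have "(\<Prod>l\<in>?J. (x / \<beta> l) ^ t l / fact (t l)) = (\<Prod>l\<in>?J. x ^ t l * (\<beta> l powr (- real (t l)) / fact (t l)))"
        by (intro prod.cong refl term_alt b) auto
      also have "\<dots> = (\<Prod>l\<in>?J. x ^ t l) * (\<Prod>l\<in>?J. \<beta> l powr (- real (t l)) / fact (t l))"
        by (rule prod.distrib)
      finally show ?thesis by (simp only: power_sum)
    qed
    moreover have "x ^ ((\<Sum>l\<in>?J. t l) + Suc k - 1) = x ^ (\<Sum>l\<in>?J. t l) * x ^ k"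
      by (simp add: power_add)
    ultimately show ?thesis
      unfolding E Dd_alt[OF b[OF s]] by (simp add: ac_simps)
  qed
  show ?thesis
    unfolding P sum_distrib_left sum_distrib_right
    by (rule sum.cong[OF refl T])
qed


theorem lemma2:
  fixes M :: "'a measure"
    and c :: "nat \<Rightarrow> 'a \<Rightarrow> complex ^ 'n"
    and \<beta> :: "nat \<Rightarrow> real"
    and m :: nat
  assumes "prob_space M"
    and "m \<ge> 1"
    and "\<And>i. i \<in> {1..m} \<Longrightarrow> \<beta> i > 0"
    and "\<And>i. i \<in> {1..m} \<Longrightarrow> is_CN_std M (c i)"
    and "prob_space.indep_vars M (\<lambda>_. borel) c {1..m}"
  shows "distributed M lborel
     (\<lambda>\<omega>. Min ((\<lambda>i. \<beta> i * (norm (c i \<omega>))\<^sup>2) ` {1..m}))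
     (\<lambda>x. ennreal (if x > 0 then
        (\<Sum>s\<in>{1..m}. \<Sum>t\<in>PiE ({1..m} - {s}) (\<lambda>_. {0..<CARD('n)}).
           (\<beta> s powr (- real CARD('n)) / Gamma (real CARD('n))) *
           (\<Prod>l\<in>{1..m} - {s}. \<beta> l powr (- real (t l)) / fact (t l)) *
           x ^ ((\<Sum>l\<in>{1..m} - {s}. t l) + CARD('n) - 1) *
           exp (- (\<Sum>j\<in>{1..m}. 1 / \<beta> j) * x))
      else 0))"
proof -
  interpret prob_space M by fact
  define I where "I = {1..m}"
  have fI: "finite I" and neI: "I \<noteq> {}" using assms(2) by (auto simp: I_def)
  have bpos: "\<And>i. i \<in> I \<Longrightarrow> 0 < \<beta> i" using assms(3) by (simp add: I_def)
  define k where "k = CARD('n) - 1"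
  have Nk: "CARD('n) = Suc k" unfolding k_def using zero_less_card_finite[where 'a='n] by simp
  define Z where "Z = (\<lambda>i \<omega>. \<beta> i * (norm (c i \<omega>))\<^sup>2)"
  have Zd: "distributed M lborel (Z i) (erlang_density k (1 / \<beta> i))" if i: "i \<in> I" for i
  proof -
    have "distributed M lborel (\<lambda>\<omega>. (norm (c i \<omega>))\<^sup>2) (erlang_density k 1)"
      using CN_norm_erlang[OF assms(4)] i unfolding k_def I_def by simp
    from erlang_distributed_mult_const[OF this bpos[OF i]] show ?thesis
      unfolding Z_def by simp
  qed
  have Zm[measurable]: "Z i \<in> borel_measurable M" if "i \<in> I" for i
    using distributed_measurable[OF Zd[OF that]] by (simp add: measurable_lborel2)
  have Zind: "indep_vars (\<lambda>_. borel) Z I"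
    unfolding Z_def I_def by (rule indep_vars_compose2[OF assms(5)]) measurable
  have Znn: "0 \<le> Z i \<omega>" if "i \<in> I" for i \<omega> unfolding Z_def using bpos[OF that] by simp
  have surv: "prob {\<omega>\<in>space M. a < Z i \<omega>} = Sv k (\<beta> i) a" if i: "i \<in> I" and a: "0 \<le> a" for i a
  proof -
    have "prob {\<omega>\<in>space M. a < Z i \<omega>} = 1 - erlang_CDF k (1 / \<beta> i) a"
      by (rule erlang_distributed_gt[OF Zd[OF i]]) (use bpos[OF i] a in auto)
    also have "\<dots> = (\<Sum>n\<le>k. (1 / \<beta> i * a) ^ n * exp (- (1 / \<beta> i) * a) / fact n)"
      using a by (simp add: erlang_CDF_def)
    also have "\<dots> = Sv k (\<beta> i) a"
      unfolding Sv_def sum_distrib_right by (intro sum.cong refl) (simp add: field_simps)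
    finally show ?thesis .
  qed
  define Y where "Y = (\<lambda>\<omega>. Min ((\<lambda>i. Z i \<omega>) ` I))"
  have Ym[measurable]: "Y \<in> borel_measurable M" unfolding Y_def using fI by measurable
  have PY: "emeasure M {\<omega>\<in>space M. Y \<omega> \<le> a} = ennreal (if 0 \<le> a then 1 - (\<Prod>i\<in>I. Sv k (\<beta> i) a) else 0)" for a
  proof (cases "0 \<le> a")
    case a: True
    have "{\<omega>\<in>space M. Y \<omega> \<le> a} = space M - (\<Inter>i\<in>I. Z i -` {a<..} \<inter> space M)"
      using fI neI by (auto simp: Y_def Min_le_iff not_less)
    moreover have "prob (\<Inter>i\<in>I. Z i -` {a<..} \<inter> space M) = (\<Prod>i\<in>I. prob (Z i -` {a<..} \<inter> space M))"
      by (rule indep_varsD_finite[OF Zind neI fI]) simp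
    moreover have "prob (Z i -` {a<..} \<inter> space M) = Sv k (\<beta> i) a" if "i \<in> I" for i
      using surv[OF that a] by (simp add: vimage_def Int_def conj_commute)
    moreover have "(\<Inter>i\<in>I. Z i -` {a<..} \<inter> space M) \<in> events"
      using fI neI by (intro sets.finite_INT) auto
    ultimately show ?thesis using a
      by (simp add: emeasure_eq_measure prob_compl)
  next
    case False
    have E: "{\<omega>\<in>space M. Y \<omega> \<le> a} = {}"
    proof -
      have "0 \<le> Y \<omega>" for \<omega> using fI neI Znn by (auto simp: Y_def)
      then show ?thesis using False by (auto simp: not_le intro: less_le_trans)
    qed
    show ?thesis unfolding E using False by simp
  qed
  define R where "R = (\<lambda>x. \<Sum>s\<in>I. Dd k (\<beta> s) x * (\<Prod>l\<in>I - {s}. Sv k (\<beta> l) x))"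
  have R_eq: "(\<Sum>s\<in>{1..m}. \<Sum>t\<in>PiE ({1..m} - {s}) (\<lambda>_. {0..<CARD('n)}).
           (\<beta> s powr (- real CARD('n)) / Gamma (real CARD('n))) *
           (\<Prod>l\<in>{1..m} - {s}. \<beta> l powr (- real (t l)) / fact (t l)) *
           x ^ ((\<Sum>l\<in>{1..m} - {s}. t l) + CARD('n) - 1) *
           exp (- (\<Sum>j\<in>{1..m}. 1 / \<beta> j) * x)) = R x" for x
    unfolding R_def Nk I_def[symmetric]
    by (intro sum.cong refl formula_eq[symmetric] fI) (auto intro: bpos)
  have Rnn: "0 \<le> R x" if "0 \<le> x" for x
    unfolding R_def using that bpos
    by (intro sum_nonneg mult_nonneg_nonneg prod_nonneg Dd_nonneg Sv_nonneg) auto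
  have Rm[measurable]: "R \<in> borel_measurable borel"
    unfolding R_def Dd_def Sv_def by measurable
  have main: "distributed M lborel Y (\<lambda>x. ennreal (if x > 0 then R x else 0))"
  proof (rule distributedI_borel_atMost[where g="\<lambda>a. if 0 \<le> a then 1 - (\<Prod>i\<in>I. Sv k (\<beta> i) a) else 0"])
    show "Y \<in> borel_measurable M" by (rule Ym)
    show "(\<lambda>x. if 0 < x then R x else 0) \<in> borel_measurable borel" by measurable
    show "AE x in lborel. 0 \<le> (if 0 < x then R x else 0)" using Rnn by simp
    fix a :: real
    show "emeasure M {x \<in> space M. Y x \<le> a} = ennreal (if 0 \<le> a then 1 - (\<Prod>i\<in>I. Sv k (\<beta> i) a) else 0)"
      by (rule PY)
    show "(\<integral>\<^sup>+x. ennreal ((if 0 < x then R x else 0) * indicator {..a} x) \<partial>lborel) =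
          ennreal (if 0 \<le> a then 1 - (\<Prod>i\<in>I. Sv k (\<beta> i) a) else 0)"
    proof (cases "0 \<le> a")
      case a: True
      have "(\<integral>\<^sup>+x. ennreal ((if 0 < x then R x else 0) * indicator {..a} x) \<partial>lborel) =
            (\<integral>\<^sup>+x. ennreal (R x) * indicator {0..a} x \<partial>lborel)"
        by (intro nn_integral_cong_AE) (use AE_lborel_singleton[of 0] in \<open>auto split: split_indicator\<close>)
      also have "\<dots> = ennreal ((1 - (\<Prod>i\<in>I. Sv k (\<beta> i) a)) - (1 - (\<Prod>i\<in>I. Sv k (\<beta> i) 0)))"
      proof (rule nn_integral_FTC_Icc[where F="\<lambda>x. 1 - (\<Prod>i\<in>I. Sv k (\<beta> i) x)"])
        show "R \<in> borel_measurable borel" by (rule Rm)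
        show "0 \<le> a" by (rule a)
        fix x assume x: "x \<in> {0..a}"
        then show "0 \<le> R x" using Rnn by simp
        show "((\<lambda>x. 1 - (\<Prod>i\<in>I. Sv k (\<beta> i) x)) has_real_derivative R x) (at x)"
          unfolding R_def by (rule F_deriv[OF fI bpos])
      qed
      also have "\<dots> = ennreal (if 0 \<le> a then 1 - (\<Prod>i\<in>I. Sv k (\<beta> i) a) else 0)"
        using a by simp
      finally show ?thesis .
    next
      case False
      have "(\<integral>\<^sup>+x. ennreal ((if 0 < x then R x else 0) * indicator {..a} x) \<partial>lborel) = (\<integral>\<^sup>+x. 0 \<partial>(lborel::real measure))"
        by (intro nn_integral_cong) (use False in \<open>auto split: split_indicator\<close>)
      then show ?thesis using False by simp
    qed
  qed
  show ?thesis using main by (simp only: Y_def Z_def I_def R_eq)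
qed


end
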